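(* Let $A\in\mathbb{S}^n$ be a non-zero diagonal matrix and let $\mathcal{L}\subset\mathbb{S}^n$ be the linear subspace defined by $\kappa_{ij}=0$ for all $i\neq j$ together with $\mathrm{tr}(AK)=0$ (where $K=(\kappa_{ij})$), and assume $\mathcal{L}$ is regular. Then the ML degree of $\mathcal{L}$ is $\mathrm{rk}(A)-1$.
   Context: $\mathbb{S}^n$ denotes the space of complex symmetric $n\times n$ matrices. A linear subspace $\mathcal{L}$ is regular if it contains a full-rank matrix. $\mathcal{L}^\perp=\{\Sigma:\mathrm{tr}(K\Sigma)=0\ \forall K\in\mathcal{L}\}$. The reciprocal variety $\mathcal{L}^{-1}$ is the Zariski closure of the set of inverses of invertible matrices in $\mathcal{L}$. The ML degree of $\mathcal{L}$ is the number of matrices in $\mathcal{L}^{-1}\cap(\mathcal{L}^\perp+S)$ for generic $S\in\mathbb{S}^n$. *)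

theory Defs
  imports "HOL-Analysis.Analysis"
begin

definition sym_mats :: "(complex^'n^'n) set" where
  "sym_mats = {M. transpose M = M}"

inductive poly_fun :: "(complex^'n^'n \<Rightarrow> complex) \<Rightarrow> bool" where
  const: "poly_fun (\<lambda>M. c)"
| coord: "poly_fun (\<lambda>M. M $ i $ j)"
| add: "poly_fun p \<Longrightarrow> poly_fun q \<Longrightarrow> poly_fun (\<lambda>M. p M + q M)"
| mult: "poly_fun p \<Longrightarrow> poly_fun q \<Longrightarrow> poly_fun (\<lambda>M. p M * q M)"

definition zariski_closed :: "(complex^'n^'n) set \<Rightarrow> bool" where
  "zariski_closed Z \<longleftrightarrow> (\<exists>P. (\<forall>p\<in>P. poly_fun p) \<and> Z = {M. \<forall>p\<in>P. p M = 0})"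

definition zariski_closure :: "(complex^'n^'n) set \<Rightarrow> (complex^'n^'n) set" where
  "zariski_closure X = \<Inter>{Z. zariski_closed Z \<and> X \<subseteq> Z}"

definition orth_space :: "(complex^'n^'n) set \<Rightarrow> (complex^'n^'n) set" where
  "orth_space L = {\<Sigma>\<in>sym_mats. \<forall>K\<in>L. trace (K ** \<Sigma>) = 0}"

definition reciprocal_variety :: "(complex^'n^'n) set \<Rightarrow> (complex^'n^'n) set" where
  "reciprocal_variety L = zariski_closure (matrix_inv ` {K\<in>L. invertible K})"

definition regular_subspace :: "(complex^'n^'n) set \<Rightarrow> bool" where
  "regular_subspace L \<longleftrightarrow> (\<exists>K\<in>L. invertible K)"

definition ml_set :: "(complex^'n^'n) set \<Rightarrow> complex^'n^'n \<Rightarrow> (complex^'n^'n) set" where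
  "ml_set L S = reciprocal_variety L \<inter> {\<Sigma> + S | \<Sigma>. \<Sigma> \<in> orth_space L}"

text \<open>"The ML degree of L is d": for generic S in S^n (i.e. outside the zero
  set of some polynomial that does not vanish identically on S^n) the set
  ml_set L S is finite with exactly d elements.\<close>
definition has_ml_degree :: "(complex^'n^'n) set \<Rightarrow> nat \<Rightarrow> bool" where
  "has_ml_degree L d \<longleftrightarrow>
     (\<exists>p. poly_fun p \<and> (\<exists>S0\<in>sym_mats. p S0 \<noteq> 0) \<and>
        (\<forall>S\<in>sym_mats. p S \<noteq> 0 \<longrightarrow> finite (ml_set L S) \<and> card (ml_set L S) = d))"

definition is_diagonal :: "complex^'n^'n \<Rightarrow> bool" where
  "is_diagonal A \<longleftrightarrow> (\<forall>i j. i \<noteq> j \<longrightarrow> A $ i $ j = 0)"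

end

theory Submission
  imports Defs "Subresultants.Subresultant_Gcd" "HOL-Computational_Algebra.Field_as_Ring"
    "HOL-Computational_Algebra.Fundamental_Theorem_Algebra"
begin

no_notation Matrix.vec_index (infixl "$" 100)



lemma poly_fun_const0: "poly_fun (\<lambda>M. c)" by (rule poly_fun.const)

lemma poly_fun_add': "poly_fun f \<Longrightarrow> poly_fun g \<Longrightarrow> poly_fun (\<lambda>M. f M + g M)"
  by (rule poly_fun.add)

lemma poly_fun_mult': "poly_fun f \<Longrightarrow> poly_fun g \<Longrightarrow> poly_fun (\<lambda>M. f M * g M)"
  by (rule poly_fun.mult)

lemma poly_fun_scale: "poly_fun f \<Longrightarrow> poly_fun (\<lambda>M. c * f M)"
  using poly_fun.mult[OF poly_fun.const[of c] ] by blast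

lemma poly_fun_sum:
  assumes "finite X" "\<And>x. x \<in> X \<Longrightarrow> poly_fun (f x)"
  shows "poly_fun (\<lambda>M. \<Sum>x\<in>X. f x M)"
  using assms
proof (induction X rule: finite_induct)
  case empty
  then show ?case using poly_fun.const[of 0] by simp
next
  case (insert x F)
  have "poly_fun (\<lambda>M. f x M + (\<Sum>x\<in>F. f x M))"
    using insert by (intro poly_fun.add) auto
  then show ?case using insert by simp
qed

lemma poly_fun_prod:
  assumes "finite X" "\<And>x. x \<in> X \<Longrightarrow> poly_fun (f x)"
  shows "poly_fun (\<lambda>M. \<Prod>x\<in>X. f x M)"
  using assms
proof (induction X rule: finite_induct)
  case empty
  then show ?case using poly_fun.const[of 1] by simp
next
  case (insert x F)
  have "poly_fun (\<lambda>M. f x M * (\<Prod>x\<in>F. f x M))"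
    using insert by (intro poly_fun.mult) auto
  then show ?case using insert by simp
qed

lemma poly_fun_if: "poly_fun f \<Longrightarrow> poly_fun g \<Longrightarrow> poly_fun (\<lambda>M. if c then f M else g M)"
  by (cases c) simp_all

definition cpoly :: "(complex^'n^'n \<Rightarrow> complex poly) \<Rightarrow> bool" where
  "cpoly Q \<longleftrightarrow> (\<forall>k. poly_fun (\<lambda>M. coeff (Q M) k))"

lemma cpoly_linear:
  assumes "poly_fun f" "poly_fun g"
  shows "cpoly (\<lambda>M. [:f M, g M:])"
  unfolding cpoly_def
proof
  fix k
  show "poly_fun (\<lambda>M. coeff [:f M, g M:] k)"
  proof (cases k)
    case 0 then show ?thesis using assms by simp
  next
    case (Suc k')
    then show ?thesis using assms poly_fun.const[of 0]
      by (cases k') simp_all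
  qed
qed

lemma cpoly_one: "cpoly (\<lambda>M. 1)"
  unfolding cpoly_def
proof
  fix k
  show "poly_fun (\<lambda>M. coeff (1::complex poly) k)" by (rule poly_fun.const)
qed

lemma cpoly_mult:
  assumes "cpoly P" "cpoly Q"
  shows "cpoly (\<lambda>M. P M * Q M)"
  unfolding cpoly_def coeff_mult
proof
  fix k
  show "poly_fun (\<lambda>M. \<Sum>i\<le>k. coeff (P M) i * coeff (Q M) (k - i))"
    using assms unfolding cpoly_def
    by (intro poly_fun_sum) (auto intro!: poly_fun.mult)
qed

lemma cpoly_prod:
  assumes "finite X" "\<And>x. x \<in> X \<Longrightarrow> cpoly (f x)"
  shows "cpoly (\<lambda>M. \<Prod>x\<in>X. f x M)"
  using assms
proof (induction X rule: finite_induct)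
  case empty
  then show ?case using cpoly_one by simp
next
  case (insert x F)
  have "cpoly (\<lambda>M. f x M * (\<Prod>x\<in>F. f x M))"
    using insert by (intro cpoly_mult) auto
  then show ?case using insert by simp
qed

lemma cpoly_pderiv:
  assumes "cpoly P"
  shows "cpoly (\<lambda>M. pderiv (P M))"
  using assms unfolding cpoly_def coeff_pderiv
  by (auto intro: poly_fun_scale)

lemma poly_fun_resultant:
  assumes "cpoly P" "cpoly Q" "\<And>M. degree (P M) = m" "\<And>M. degree (Q M) = n"
  shows "poly_fun (\<lambda>M. resultant (P M) (Q M))"
proof -
  have eq: "resultant (P M) (Q M) =
     (\<Sum>p | p permutes {0..<m+n}. of_int (sign p) *
        (\<Prod>i = 0..<m+n. sylvester_mat_sub m n (P M) (Q M) $$ (i, p i)))" for M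
    unfolding resultant_def sylvester_mat_def assms(3,4) Determinant.det_def by simp
  have ent: "poly_fun (\<lambda>M. sylvester_mat_sub m n (P M) (Q M) $$ (i, j))"
    if "i < m+n" "j < m+n" for i j
    unfolding sylvester_mat_sub_index[OF that]
    using assms(1,2) unfolding cpoly_def
    by (intro poly_fun_if poly_fun.const) auto
  show ?thesis
    unfolding eq
    by (intro poly_fun_sum poly_fun_scale poly_fun_prod ent)
       (auto simp: finite_permutations permutes_in_image)
qed



lemma resultant_zero_iff:
  fixes f g :: "complex poly"
  assumes "f \<noteq> 0"
  shows "resultant f g = 0 \<longleftrightarrow> (\<exists>t. poly f t = 0 \<and> poly g t = 0)"
proof -
  have "degree (gcd f g) \<noteq> 0 \<longleftrightarrow> (\<exists>t. poly f t = 0 \<and> poly g t = 0)"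
  proof
    assume "degree (gcd f g) \<noteq> 0"
    then have "\<not> constant (poly (gcd f g))" by (simp add: constant_degree)
    then obtain z where "poly (gcd f g) z = 0" using fundamental_theorem_of_algebra by blast
    moreover have "gcd f g dvd f" "gcd f g dvd g" by auto
    ultimately show "\<exists>t. poly f t = 0 \<and> poly g t = 0"
      by (metis dvd_def mult_eq_0_iff poly_mult)
  next
    assume "\<exists>t. poly f t = 0 \<and> poly g t = 0"
    then obtain t where t: "poly f t = 0" "poly g t = 0" by blast
    then have "[:-t,1:] dvd f" "[:-t,1:] dvd g" by (simp_all add: poly_eq_0_iff_dvd)
    then have d: "[:-t,1:] dvd gcd f g" by simp
    have "gcd f g \<noteq> 0" using assms by simp
    from dvd_imp_degree_le[OF d this] show "degree (gcd f g) \<noteq> 0" by simp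
  qed
  then show ?thesis using resultant_0_gcd by blast
qed

lemma card_roots_sqfree:
  fixes G :: "complex poly"
  assumes "\<And>t. \<not> (poly G t = 0 \<and> poly (pderiv G) t = 0)"
  shows "finite {t. poly G t = 0} \<and> card {t. poly G t = 0} = degree G"
proof -
  have sq: "rsquarefree G" using assms rsquarefree_roots by blast
  then have G0: "G \<noteq> 0" by (simp add: rsquarefree_def)
  have fin: "finite {t. poly G t = 0}" using G0 poly_roots_finite by blast
  have "degree G = degree (Polynomial.smult (lead_coeff G) (\<Prod>z|poly G z = 0. [:-z, 1:]))"
    using complex_poly_decompose_rsquarefree[OF sq] by simp
  also have "\<dots> = degree (\<Prod>z|poly G z = 0. [:-z, 1:])" using G0 by simp
  also have "\<dots> = (\<Sum>z|poly G z = 0. degree [:-z, 1:])"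
    by (rule degree_prod_eq_sum_degree) auto
  also have "\<dots> = card {t. poly G t = 0}" by simp
  finally show ?thesis using fin by simp
qed

definition PP :: "'n set \<Rightarrow> ('n \<Rightarrow> complex) \<Rightarrow> ('n \<Rightarrow> complex) \<Rightarrow> complex poly" where
  "PP I a s = (\<Prod>i\<in>I. [:s i, a i:])"

lemma degree_PP:
  assumes "finite I" "\<And>i. i \<in> I \<Longrightarrow> a i \<noteq> 0"
  shows "degree (PP I a s) = card I"
proof -
  have "degree (PP I a s) = (\<Sum>i\<in>I. degree [:s i, a i:])"
    unfolding PP_def using assms by (intro degree_prod_eq_sum_degree) auto
  also have "\<dots> = (\<Sum>i\<in>I. 1)" using assms by (intro sum.cong) auto
  finally show ?thesis by simp
qed

lemma poly_PP: "poly (PP I a s) t = (\<Prod>i\<in>I. s i + t * a i)"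
  unfolding PP_def poly_prod by simp

lemma pderiv_lin: "pderiv [:x, y:] = [:y:]"
  by (simp add: pderiv_pCons)

lemma poly_PP1:
  "poly (pderiv (PP I a s)) t = (\<Sum>k\<in>I. (\<Prod>j\<in>I-{k}. s j + t * a j) * a k)"
  unfolding PP_def pderiv_prod poly_sum poly_mult poly_prod pderiv_lin by simp

lemma poly_PP2:
  assumes "finite I"
  shows "poly (pderiv (pderiv (PP I a s))) t =
    (\<Sum>k\<in>I. (\<Sum>l\<in>I-{k}. (\<Prod>j\<in>I-{k}-{l}. s j + t * a j) * a l) * a k)"
proof -
  have "pderiv (pderiv (PP I a s)) = pderiv (\<Sum>k\<in>I. (\<Prod>j\<in>I-{k}. [:s j, a j:]) * [:a k:])"
    unfolding PP_def pderiv_prod pderiv_lin by simp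
  also have "\<dots> = (\<Sum>k\<in>I. pderiv (\<Prod>j\<in>I-{k}. [:s j, a j:]) * [:a k:])"
    by (simp add: pderiv_sum pderiv_mult pderiv_smult)
  also have "\<dots> = (\<Sum>k\<in>I. (\<Sum>l\<in>I-{k}. (\<Prod>j\<in>I-{k}-{l}. [:s j, a j:]) * [:a l:]) * [:a k:])"
    unfolding pderiv_prod pderiv_lin by simp
  finally show ?thesis by (simp add: poly_sum poly_prod mult.commute)
qed



lemma PP1_at_single_zero:
  assumes "finite I" "i \<in> I" "s i + t * a i = 0" "a i \<noteq> 0"
    "\<And>j. j \<in> I \<Longrightarrow> j \<noteq> i \<Longrightarrow> s j + t * a j \<noteq> 0"
  shows "poly (pderiv (PP I a s)) t \<noteq> 0"
proof -
  have "poly (pderiv (PP I a s)) t = (\<Prod>j\<in>I-{i}. s j + t * a j) * a i +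
      (\<Sum>k\<in>I-{i}. (\<Prod>j\<in>I-{k}. s j + t * a j) * a k)"
    unfolding poly_PP1 using assms by (simp add: sum.remove)
  also have "(\<Sum>k\<in>I-{i}. (\<Prod>j\<in>I-{k}. s j + t * a j) * a k) = 0"
  proof (intro sum.neutral ballI)
    fix k assume k: "k \<in> I - {i}"
    have "(\<Prod>j\<in>I-{k}. s j + t * a j) = 0"
      using assms k by (intro prod_zero) auto
    then show "(\<Prod>j\<in>I-{k}. s j + t * a j) * a k = 0" by simp
  qed
  finally show ?thesis using assms by simp
qed

lemma PP1_nonzero_form:
  assumes "finite I" "\<And>j. j \<in> I \<Longrightarrow> s j + t * a j \<noteq> 0"
  shows "poly (pderiv (PP I a s)) t =
     (\<Prod>j\<in>I. s j + t * a j) * (\<Sum>k\<in>I. a k / (s k + t * a k))"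
proof -
  let ?w = "\<lambda>j. s j + t * a j"
  have "(\<Prod>j\<in>I-{k}. ?w j) = (\<Prod>j\<in>I. ?w j) / ?w k" if "k \<in> I" for k
    using assms that by (simp add: prod.remove[of I k] )
  then show ?thesis unfolding poly_PP1 sum_distrib_left
    by (intro sum.cong) auto
qed

lemma PP2_nonzero_form:
  assumes "finite I" "\<And>j. j \<in> I \<Longrightarrow> s j + t * a j \<noteq> 0"
  shows "poly (pderiv (pderiv (PP I a s))) t =
     (\<Prod>j\<in>I. s j + t * a j) * (\<Sum>k\<in>I. \<Sum>l\<in>I-{k}. (a k / (s k + t * a k)) * (a l / (s l + t * a l)))"
proof -
  let ?w = "\<lambda>j. s j + t * a j"
  have "(\<Prod>j\<in>I-{k}-{l}. ?w j) = (\<Prod>j\<in>I. ?w j) / (?w k * ?w l)" if "k \<in> I" "l \<in> I" "l \<noteq> k" for k l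
  proof -
    have "(\<Prod>j\<in>I. ?w j) = ?w k * (\<Prod>j\<in>I-{k}. ?w j)" using assms that by (simp add: prod.remove[of I k])
    also have "(\<Prod>j\<in>I-{k}. ?w j) = ?w l * (\<Prod>j\<in>I-{k}-{l}. ?w j)" using assms that by (simp add: prod.remove[of "I-{k}" l])
    finally show ?thesis using assms that by simp
  qed
  then show ?thesis unfolding poly_PP2[OF assms(1)] sum_distrib_left
    by (intro sum.cong) (auto simp: sum_distrib_left sum_distrib_right intro!: sum.cong)
qed

lemma sum_pairs_sq:
  fixes z :: "'n \<Rightarrow> complex"
  assumes "finite I"
  shows "(\<Sum>k\<in>I. \<Sum>l\<in>I-{k}. z k * z l) = (\<Sum>k\<in>I. z k)^2 - (\<Sum>k\<in>I. (z k)^2)"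
proof -
  have "(\<Sum>k\<in>I. \<Sum>l\<in>I-{k}. z k * z l) = (\<Sum>k\<in>I. z k * ((\<Sum>l\<in>I. z l) - z k))"
    using assms by (intro sum.cong) (auto simp: sum_diff1 sum_distrib_left[symmetric])
  also have "\<dots> = (\<Sum>k\<in>I. z k)^2 - (\<Sum>k\<in>I. (z k)^2)"
    by (simp add: algebra_simps power2_eq_square sum_subtractf sum_distrib_right[symmetric])
  finally show ?thesis .
qed

lemma real_roots_no_double:
  fixes c :: "'n \<Rightarrow> real" and t :: complex
  assumes "finite I" "I \<noteq> {}" "\<And>k. k \<in> I \<Longrightarrow> of_real (c k) + t \<noteq> 0"
    and s1: "(\<Sum>k\<in>I. 1 / (of_real (c k) + t)) = 0"
    and s2: "(\<Sum>k\<in>I. (1 / (of_real (c k) + t))^2) = 0"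
  shows False
proof -
  let ?d = "\<lambda>k. (c k + Re t)^2 + (Im t)^2"
  have dpos: "?d k > 0" if "k \<in> I" for k
  proof -
    have "of_real (c k) + t \<noteq> 0" using assms that by auto
    then have "c k + Re t \<noteq> 0 \<or> Im t \<noteq> 0" by (auto simp: complex_eq_iff)
    then show ?thesis by (auto simp: add_pos_nonneg sum_power2_gt_zero_iff)
  qed
  have "Im (\<Sum>k\<in>I. 1 / (of_real (c k) + t)) = (\<Sum>k\<in>I. - Im t / ?d k)"
    by (simp add: Im_divide power2_eq_square)
  also have "\<dots> = - Im t * (\<Sum>k\<in>I. 1 / ?d k)"
    by (simp add: sum_distrib_left sum_negf)
  finally have "Im t * (\<Sum>k\<in>I. 1 / ?d k) = 0" using s1 by simp
  moreover have "(\<Sum>k\<in>I. 1 / ?d k) > 0"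
    using dpos assms(1,2) by (intro sum_pos) auto
  ultimately have im0: "Im t = 0" by simp
  then have teq: "t = of_real (Re t)" by (simp add: complex_eq_iff)
  have eq: "(\<Sum>k\<in>I. (1 / (of_real (c k) + t))^2) = of_real (\<Sum>k\<in>I. (1 / (c k + Re t))^2)"
    by (subst teq) simp
  have z: "complex_of_real (\<Sum>k\<in>I. (1 / (c k + Re t))^2) = 0" using eq s2 by metis
  have pos: "(\<Sum>k\<in>I. (1 / (c k + Re t))^2) > 0"
  proof (intro sum_pos assms(1,2))
    fix k assume "k \<in> I"
    then have "c k + Re t \<noteq> 0" using assms(3)[of k] teq
      by (metis of_real_add of_real_eq_0_iff)
    then show "(1 / (c k + Re t))^2 > 0" by simp
  qed
  from z have "(\<Sum>k\<in>I. (1 / (c k + Re t))^2) = 0" by (simp only: of_real_eq_0_iff)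
  with pos show False by simp
qed



lemma S0_good:
  fixes c :: "'n \<Rightarrow> real"
  assumes fin: "finite I" and ne: "I \<noteq> {}" and a: "\<And>k. k \<in> I \<Longrightarrow> a k \<noteq> 0"
    and inj: "inj_on c I" and s: "\<And>k. k \<in> I \<Longrightarrow> s k = a k * of_real (c k)"
  shows "\<not> (poly (PP I a s) t = 0 \<and> poly (pderiv (PP I a s)) t = 0)"
    and "\<not> (poly (pderiv (PP I a s)) t = 0 \<and> poly (pderiv (pderiv (PP I a s))) t = 0)"
proof -
  have w: "s k + t * a k = a k * (of_real (c k) + t)" if "k \<in> I" for k
    using s[OF that] by (simp add: algebra_simps)
  have "poly (PP I a s) t \<noteq> 0 \<and> \<not> (poly (pderiv (PP I a s)) t = 0 \<and> poly (pderiv (pderiv (PP I a s))) t = 0)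
     \<or> poly (pderiv (PP I a s)) t \<noteq> 0"
  proof (cases "\<exists>i\<in>I. s i + t * a i = 0")
    case True
    then obtain i where i: "i \<in> I" "s i + t * a i = 0" by blast
    then have ti: "t = - of_real (c i)" using w[OF i(1)] a[OF i(1)] by (simp add: add_eq_0_iff)
    have "s j + t * a j \<noteq> 0" if "j \<in> I" "j \<noteq> i" for j
    proof -
      have "c j \<noteq> c i" using inj that i(1) by (auto dest: inj_onD)
      then have "of_real (c j) + t \<noteq> 0" using ti by simp
      then show ?thesis using w[OF that(1)] a[OF that(1)] by simp
    qed
    then have "poly (pderiv (PP I a s)) t \<noteq> 0"
      using PP1_at_single_zero[where I=I and i=i and s=s and t=t and a=a] fin i a[OF i(1)] by blast
    then show ?thesis by blast
  next
    case False
    then have nz: "\<And>j. j \<in> I \<Longrightarrow> s j + t * a j \<noteq> 0" by blast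
    have "poly (PP I a s) t \<noteq> 0" unfolding poly_PP using fin nz by simp
    moreover have W: "(\<Prod>j\<in>I. s j + t * a j) \<noteq> 0" using fin nz by simp
    let ?z = "\<lambda>k. 1 / (of_real (c k) + t)"
    have zk: "a k / (s k + t * a k) = ?z k" if "k \<in> I" for k
      using w[OF that] a[OF that] by simp
    have "\<not> (poly (pderiv (PP I a s)) t = 0 \<and> poly (pderiv (pderiv (PP I a s))) t = 0)"
    proof
      assume h: "poly (pderiv (PP I a s)) t = 0 \<and> poly (pderiv (pderiv (PP I a s))) t = 0"
      have "(\<Sum>k\<in>I. a k / (s k + t * a k)) = 0"
        using h W PP1_nonzero_form[OF fin nz] by simp
      then have s1: "(\<Sum>k\<in>I. ?z k) = 0" using zk by (simp cong: sum.cong)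
      have "(\<Sum>k\<in>I. \<Sum>l\<in>I-{k}. (a k / (s k + t * a k)) * (a l / (s l + t * a l))) = 0"
        using h W PP2_nonzero_form[OF fin nz] by simp
      moreover have "(\<Sum>k\<in>I. \<Sum>l\<in>I-{k}. (a k / (s k + t * a k)) * (a l / (s l + t * a l)))
          = (\<Sum>k\<in>I. \<Sum>l\<in>I-{k}. ?z k * ?z l)"
        by (intro sum.cong refl) (simp only: zk Diff_iff)
      ultimately have "(\<Sum>k\<in>I. \<Sum>l\<in>I-{k}. ?z k * ?z l) = 0" by simp
      then have s2: "(\<Sum>k\<in>I. (?z k)^2) = 0"
        using sum_pairs_sq[OF fin, of ?z] s1 by simp
      have nz2: "of_real (c k) + t \<noteq> 0" if "k \<in> I" for k
        using nz[OF that] w[OF that] by simp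
      show False using real_roots_no_double[OF fin ne nz2 s1 s2] .
    qed
    ultimately show ?thesis by blast
  qed
  then show "\<not> (poly (PP I a s) t = 0 \<and> poly (pderiv (PP I a s)) t = 0)"
    and "\<not> (poly (pderiv (PP I a s)) t = 0 \<and> poly (pderiv (pderiv (PP I a s))) t = 0)"
    by blast+
qed



definition diagm :: "('n \<Rightarrow> complex) \<Rightarrow> complex^'n^'n" where
  "diagm d = (\<chi> i j. if i = j then d i else 0)"

lemma diagm_nth: "diagm d $ i $ j = (if i = j then d i else 0)"
  by (simp add: diagm_def)

lemma if0_mult: "(if c then x else 0) * (y::complex) = (if c then x * y else 0)"
  "(y::complex) * (if c then x else 0) = (if c then y * x else 0)" by simp_all

lemma diagm_mult: "diagm d ** diagm e = diagm (\<lambda>i. d i * e i)"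
  unfolding Finite_Cartesian_Product.vec_eq_iff matrix_matrix_mult_def diagm_nth vec_lambda_beta
  by (simp add: if0_mult sum.delta sum.delta')

lemma mat1_diagm: "Finite_Cartesian_Product.mat 1 = diagm (\<lambda>_. 1)"
  unfolding Finite_Cartesian_Product.vec_eq_iff Finite_Cartesian_Product.mat_def diagm_nth by simp

lemma diag_eq_diagm:
  assumes "\<And>i j. i \<noteq> j \<Longrightarrow> M $ i $ j = 0"
  shows "M = diagm (\<lambda>i. M $ i $ i)"
  using assms unfolding Finite_Cartesian_Product.vec_eq_iff diagm_nth by simp

lemma transpose_diagm: "transpose (diagm d) = diagm d"
  unfolding Finite_Cartesian_Product.vec_eq_iff transpose_def diagm_nth by simp

lemma trace_diagm_mult: "trace (diagm d ** M) = (\<Sum>i\<in>UNIV. d i * M $ i $ i)"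
  unfolding trace_def matrix_matrix_mult_def diagm_nth vec_lambda_beta
  by (simp add: if0_mult sum.delta sum.delta')

lemma matrix_inv_unique':
  fixes A B :: "complex^'n^'n"
  assumes "A ** B = Finite_Cartesian_Product.mat 1" "B ** A = Finite_Cartesian_Product.mat 1"
  shows "matrix_inv A = B"
proof -
  have ex: "\<exists>A'. A ** A' = Finite_Cartesian_Product.mat 1 \<and> A' ** A = Finite_Cartesian_Product.mat 1" using assms by blast
  let ?C = "matrix_inv A"
  have C: "A ** ?C = Finite_Cartesian_Product.mat 1 \<and> ?C ** A = Finite_Cartesian_Product.mat 1"
    unfolding matrix_inv_def by (rule someI_ex[OF ex])
  have "?C = ?C ** (A ** B)" using assms by simp
  also have "\<dots> = (?C ** A) ** B" by (simp add: matrix_mul_assoc)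
  also have "\<dots> = B" using C by simp
  finally show ?thesis .
qed

lemma diagm_inv:
  assumes "\<And>i. d i \<noteq> 0"
  shows "invertible (diagm d)" "matrix_inv (diagm d) = diagm (\<lambda>i. 1 / d i)"
proof -
  have 1: "diagm d ** diagm (\<lambda>i. 1 / d i) = Finite_Cartesian_Product.mat 1" "diagm (\<lambda>i. 1 / d i) ** diagm d = Finite_Cartesian_Product.mat 1"
    using assms by (simp_all add: diagm_mult mat1_diagm)
  then show "invertible (diagm d)" unfolding invertible_def by blast
  show "matrix_inv (diagm d) = diagm (\<lambda>i. 1 / d i)" using matrix_inv_unique'[OF 1] .
qed

lemma invertible_diagm_nz:
  assumes "invertible (diagm d)"
  shows "d i \<noteq> 0"
proof
  assume d0: "d i = 0"
  obtain B where B: "B ** diagm d = Finite_Cartesian_Product.mat 1" using assms invertible_left_inverse by blast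
  have "diagm d *v axis i 1 = 0"
    using d0 unfolding Finite_Cartesian_Product.vec_eq_iff matrix_vector_mult_def diagm_nth axis_def vec_lambda_beta
    by (simp add: if0_mult sum.delta sum.delta')
  then have "B *v (diagm d *v axis i 1) = 0" by simp
  then have "axis i (1::complex) = 0" using B by (simp add: matrix_vector_mul_assoc)
  then show False by (simp add: axis_eq_0_iff)
qed

lemma rank_diag:
  fixes A :: "complex^'n^'n"
  assumes "\<And>i j. i \<noteq> j \<Longrightarrow> A $ i $ j = 0"
  shows "rank A = card {i. A $ i $ i \<noteq> 0}"
proof -
  let ?I = "{i. A $ i $ i \<noteq> 0}"
  let ?V = "{x::complex^'n. \<forall>i. i \<notin> ?I \<longrightarrow> x $ i = 0}"
  have "vec.span (Finite_Cartesian_Product.rows A) = ?V"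
  proof
    show "vec.span (Finite_Cartesian_Product.rows A) \<subseteq> ?V"
    proof (rule vec.span_minimal)
      show "Finite_Cartesian_Product.rows A \<subseteq> ?V" using assms by (auto simp: Finite_Cartesian_Product.rows_def Finite_Cartesian_Product.row_def) (metis)
      show "vec.subspace ?V" by (rule subspace_substandard_cart)
    qed
    show "?V \<subseteq> vec.span (Finite_Cartesian_Product.rows A)"
    proof
      fix x assume x: "x \<in> ?V"
      have "x = (\<Sum>i\<in>?I. (x $ i / A $ i $ i) *s Finite_Cartesian_Product.row i A)"
        unfolding Finite_Cartesian_Product.vec_eq_iff
      proof
        fix i
        have "(\<Sum>k\<in>?I. (x $ k / A $ k $ k) *s Finite_Cartesian_Product.row k A) $ i
            = (\<Sum>k\<in>?I. (x $ k / A $ k $ k) * A $ k $ i)"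
          by (simp add: sum_component Finite_Cartesian_Product.row_def)
        also have "\<dots> = (\<Sum>k\<in>?I. if k = i then x $ i else 0)"
          by (intro sum.cong refl) (auto simp: assms)
        also have "\<dots> = x $ i" using x by (simp add: sum.delta')
        finally show "x $ i = (\<Sum>k\<in>?I. (x $ k / A $ k $ k) *s Finite_Cartesian_Product.row k A) $ i" by simp
      qed
      also have "\<dots> \<in> vec.span (Finite_Cartesian_Product.rows A)"
        by (intro vec.span_sum vec.span_scale vec.span_base) (auto simp: Finite_Cartesian_Product.rows_def)
      finally show "x \<in> vec.span (Finite_Cartesian_Product.rows A)" .
    qed
  qed
  then have "vec.dim (Finite_Cartesian_Product.rows A) = vec.dim ?V" by (metis vec.dim_span)
  moreover have "vec.dim ?V = card ?I" by (rule dim_substandard_cart)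
  ultimately show ?thesis unfolding row_rank_def_gen by simp
qed



lemma transpose_minus: "transpose (M - N) = transpose M - (transpose N :: complex^'n^'n)"
  unfolding Finite_Cartesian_Product.vec_eq_iff transpose_def by simp

theorem proposition3p7:
  fixes A :: "complex^'n^'n"
  assumes "is_diagonal A"
    and "A \<noteq> 0"
    and "L = {K\<in>sym_mats. (\<forall>i j. i \<noteq> j \<longrightarrow> K $ i $ j = 0) \<and> trace (A ** K) = 0}"
    and "regular_subspace L"
  shows "has_ml_degree L (rank A - 1)"
proof -
  define a where "a = (\<lambda>i. A $ i $ i)"
  define I where "I = {i. a i \<noteq> 0}"
  have offA: "\<And>i j. i \<noteq> j \<Longrightarrow> A $ i $ j = 0" using assms(1) unfolding is_diagonal_def by blast
  have Adiag: "A = diagm a" unfolding a_def by (rule diag_eq_diagm[OF offA])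
  have finI: "finite I" by simp
  have aI: "\<And>i. i \<in> I \<Longrightarrow> a i \<noteq> 0" "\<And>i. i \<notin> I \<Longrightarrow> a i = 0" by (auto simp: I_def)
  have Ine: "I \<noteq> {}"
  proof
    assume "I = {}"
    then have "a = (\<lambda>_. 0)" using aI by auto
    then have "A = 0" using Adiag unfolding Finite_Cartesian_Product.vec_eq_iff diagm_nth by simp
    then show False using assms(2) by simp
  qed
  have cardI: "card I \<ge> 1" using finI Ine by (simp add: Suc_le_eq card_gt_0_iff)
  have rankA: "rank A = card I" using rank_diag[OF offA] unfolding I_def a_def .
  have sumI: "(\<Sum>i\<in>UNIV. a i * f i) = (\<Sum>i\<in>I. a i * f i)" for f :: "'n \<Rightarrow> complex"
    by (rule sum.mono_neutral_cong_right) (auto simp: aI)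
  have Lchar: "K \<in> L \<longleftrightarrow> (\<exists>k. K = diagm k \<and> (\<Sum>i\<in>I. a i * k i) = 0)" for K
  proof
    assume K: "K \<in> L"
    then have off: "\<And>i j. i \<noteq> j \<Longrightarrow> K $ i $ j = 0" and tr: "trace (A ** K) = 0"
      using assms(3) by auto
    have "K = diagm (\<lambda>i. K $ i $ i)" by (rule diag_eq_diagm[OF off])
    moreover have "(\<Sum>i\<in>I. a i * K $ i $ i) = 0"
      using tr unfolding Adiag trace_diagm_mult sumI .
    ultimately show "\<exists>k. K = diagm k \<and> (\<Sum>i\<in>I. a i * k i) = 0" by blast
  next
    assume "\<exists>k. K = diagm k \<and> (\<Sum>i\<in>I. a i * k i) = 0"
    then obtain k where k: "K = diagm k" "(\<Sum>i\<in>I. a i * k i) = 0" by blast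
    have "K \<in> sym_mats" unfolding sym_mats_def k(1) using transpose_diagm[of k] by simp
    moreover have "\<forall>i j. i \<noteq> j \<longrightarrow> K $ i $ j = 0" unfolding k(1) diagm_nth by simp
    moreover have "trace (A ** K) = 0" unfolding Adiag k(1) trace_diagm_mult diagm_nth sumI
      using k(2) by simp
    ultimately show "K \<in> L" using assms(3) by blast
  qed
  define G where "G S = pderiv (PP I a (\<lambda>i. S $ i $ i))" for S :: "complex^'n^'n"
  define \<phi> where "\<phi> S t = diagm (\<lambda>i. S $ i $ i + t * a i)" for S :: "complex^'n^'n" and t
  define Z where "Z = {M::complex^'n^'n. (\<forall>i j. i \<noteq> j \<longrightarrow> M $ i $ j = 0) \<and>
       (\<Sum>k\<in>I. (\<Prod>j\<in>I-{k}. M $ j $ j) * a k) = 0}"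
  define X where "X = matrix_inv ` {K\<in>L. invertible K}"
  have Zclosed: "zariski_closed Z"
  proof -
    define P where "P = {(\<lambda>M::complex^'n^'n. M $ i $ j) | i j. i \<noteq> j} \<union>
       {(\<lambda>M. \<Sum>k\<in>I. (\<Prod>j\<in>I-{k}. M $ j $ j) * a k)}"
    have "\<forall>p\<in>P. poly_fun p"
      unfolding P_def
      by (auto intro!: poly_fun.coord poly_fun_sum poly_fun.mult poly_fun_prod poly_fun.const)
    moreover have "Z = {M. \<forall>p\<in>P. p M = 0}" unfolding Z_def P_def by auto
    ultimately show ?thesis unfolding zariski_closed_def by blast
  qed
  have XZ: "X \<subseteq> Z"
  proof
    fix M assume "M \<in> X"
    then obtain K where K: "K \<in> L" "invertible K" "M = matrix_inv K" unfolding X_def by blast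
    then obtain k where k: "K = diagm k" "(\<Sum>i\<in>I. a i * k i) = 0" using Lchar by blast
    have knz: "k i \<noteq> 0" for i using invertible_diagm_nz K(2) k(1) by blast
    have M: "M = diagm (\<lambda>i. 1 / k i)" using K(3) k(1) diagm_inv(2)[of k] knz by simp
    have "(\<Prod>j\<in>I-{m}. 1 / k j) = (\<Prod>j\<in>I. 1 / k j) * k m" if "m \<in> I" for m
      using that knz finI by (simp add: prod.remove[of I m])
    then have "(\<Sum>m\<in>I. (\<Prod>j\<in>I-{m}. M $ j $ j) * a m) = (\<Prod>j\<in>I. 1 / k j) * (\<Sum>m\<in>I. a m * k m)"
      unfolding M diagm_nth sum_distrib_left by (auto intro!: sum.cong)
    then show "M \<in> Z" unfolding Z_def using k(2) by (simp add: M diagm_nth)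
  qed
  have recZ: "reciprocal_variety L \<subseteq> Z"
    unfolding reciprocal_variety_def zariski_closure_def X_def[symmetric]
    using Zclosed XZ by blast
  have Xrec: "X \<subseteq> reciprocal_variety L"
    unfolding reciprocal_variety_def zariski_closure_def X_def[symmetric] by blast
  have orthD: "\<Sigma> $ j $ j = (\<Sigma> $ i0 $ i0 / a i0) * a j"
    if "\<Sigma> \<in> orth_space L" "i0 \<in> I" for \<Sigma> i0 j
  proof (cases "j = i0")
    case True then show ?thesis using aI that by simp
  next
    case False
    define k where "k l = (if l = j then a i0 else 0) + (if l = i0 then - a j else 0)" for l
    have "(\<Sum>i\<in>UNIV. a i * k i) = 0"
      unfolding k_def using False by (simp add: algebra_simps sum.distrib if0_mult sum.delta)
    then have "diagm k \<in> L" using Lchar sumI by metis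
    then have "trace (diagm k ** \<Sigma>) = 0" using that(1) unfolding orth_space_def by blast
    then have "a i0 * \<Sigma> $ j $ j - a j * \<Sigma> $ i0 $ i0 = 0"
      unfolding trace_diagm_mult k_def using False
      by (simp add: algebra_simps sum.distrib if0_mult sum.delta)
    then show ?thesis using aI that(2) by (simp add: field_simps)
  qed
  have roots_poly: "poly (G S) t = (\<Sum>k\<in>I. (\<Prod>j\<in>I-{k}. S $ j $ j + t * a j) * a k)" for S t
    unfolding G_def poly_PP1 ..
  define p where "p S = (\<Prod>j\<in>-I. S $ j $ j) * resultant (PP I a (\<lambda>i. S $ i $ i)) (G S)
       * resultant (G S) (pderiv (G S))" for S :: "complex^'n^'n"
  have degPP: "degree (PP I a (\<lambda>i. S $ i $ i)) = card I" for S
    using degree_PP[OF finI] aI by blast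
  have degG: "degree (G S) = card I - 1" for S unfolding G_def degree_pderiv degPP ..
  have degG': "degree (pderiv (G S)) = card I - 1 - 1" for S unfolding degree_pderiv degG ..
  have PPnz: "PP I a (\<lambda>i. S $ i $ i) \<noteq> 0" for S using degPP[of S] cardI by auto
  have Gnz: "G S \<noteq> 0" for S
  proof
    assume "G S = 0"
    then have "degree (PP I a (\<lambda>i. S $ i $ i)) = 0" unfolding G_def pderiv_eq_0_iff .
    then show False using degPP[of S] cardI by simp
  qed
  have cpPP: "cpoly (\<lambda>S. PP I a (\<lambda>i. S $ i $ i))"
    unfolding PP_def
    by (intro cpoly_prod finI cpoly_linear poly_fun.coord poly_fun.const)
  have cpG: "cpoly G" unfolding G_def by (intro cpoly_pderiv cpPP)
  have polyp: "poly_fun p"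
    unfolding p_def
    by (intro poly_fun.mult poly_fun_prod poly_fun.coord
        poly_fun_resultant[OF cpPP cpG degPP degG] poly_fun_resultant[OF cpG cpoly_pderiv[OF cpG] degG degG'])
       simp_all
  define c where "c i = real (to_nat i)" for i :: 'n
  define S0 where "S0 = diagm (\<lambda>i. if i \<in> I then a i * of_real (c i) else 1)"
  have S0sym: "S0 \<in> sym_mats" unfolding sym_mats_def S0_def using transpose_diagm by simp
  have injc: "inj_on c I" unfolding c_def inj_on_def by simp
  have S0d: "S0 $ k $ k = a k * of_real (c k)" if "k \<in> I" for k
    using that unfolding S0_def diagm_nth by simp
  have pS0: "p S0 \<noteq> 0"
  proof -
    have "(\<Prod>j\<in>-I. S0 $ j $ j) = 1" unfolding S0_def diagm_nth by simp
    moreover have "resultant (PP I a (\<lambda>i. S0 $ i $ i)) (G S0) \<noteq> 0"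
      unfolding resultant_zero_iff[OF PPnz] G_def
      using S0_good(1)[where a=a and s="\<lambda>i. S0 $ i $ i" and c=c and I=I, OF finI Ine aI(1) injc S0d] by blast
    moreover have "resultant (G S0) (pderiv (G S0)) \<noteq> 0"
    proof -
      have "\<not> (\<exists>t. poly (G S0) t = 0 \<and> poly (pderiv (G S0)) t = 0)"
        unfolding G_def using S0_good(2)[where a=a and s="\<lambda>i. S0 $ i $ i" and c=c and I=I, OF finI Ine aI(1) injc S0d] by blast
      then show ?thesis using resultant_zero_iff[OF Gnz[of S0]] by blast
    qed
    ultimately show ?thesis unfolding p_def by simp
  qed
  have main: "ml_set L S = \<phi> S ` {t. poly (G S) t = 0}"
    if S: "S \<in> sym_mats" and pS: "p S \<noteq> 0" for S
  proof -
    have Soff: "S $ j $ j \<noteq> 0" if "j \<notin> I" for j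
      using pS that unfolding p_def by auto
    have res1: "resultant (PP I a (\<lambda>i. S $ i $ i)) (G S) \<noteq> 0" using pS unfolding p_def by auto
    have nocommon: "\<not> (poly (PP I a (\<lambda>i. S $ i $ i)) t = 0 \<and> poly (G S) t = 0)" for t
      using res1 unfolding resultant_zero_iff[OF PPnz] by blast
    obtain i0 where i0: "i0 \<in> I" using Ine by blast
    show ?thesis
    proof
      show "ml_set L S \<subseteq> \<phi> S ` {t. poly (G S) t = 0}"
      proof
        fix M assume "M \<in> ml_set L S"
        then obtain \<Sigma> where MZ: "M \<in> Z" and M: "M = \<Sigma> + S" and Sig: "\<Sigma> \<in> orth_space L"
          unfolding ml_set_def using recZ by blast
        define t where "t = \<Sigma> $ i0 $ i0 / a i0"
        have Mphi: "M = \<phi> S t"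
          unfolding Finite_Cartesian_Product.vec_eq_iff \<phi>_def diagm_nth
        proof (intro allI)
          fix i j
          show "M $ i $ j = (if i = j then S $ i $ i + t * a i else 0)"
          proof (cases "i = j")
            case True
            then show ?thesis unfolding M t_def using orthD[OF Sig i0, of i] by simp
          next
            case False
            then show ?thesis using MZ unfolding Z_def by auto
          qed
        qed
        have "poly (G S) t = 0"
          using MZ unfolding Z_def Mphi roots_poly \<phi>_def by (simp add: diagm_nth)
        then show "M \<in> \<phi> S ` {t. poly (G S) t = 0}" using Mphi by blast
      qed
      show "\<phi> S ` {t. poly (G S) t = 0} \<subseteq> ml_set L S"
      proof
        fix M assume "M \<in> \<phi> S ` {t. poly (G S) t = 0}"
        then obtain t where t: "poly (G S) t = 0" and M: "M = \<phi> S t" by blast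
        define w where "w j = S $ j $ j + t * a j" for j
        have wnz: "w j \<noteq> 0" for j
        proof (cases "j \<in> I")
          case True
          show ?thesis
          proof
            assume "w j = 0"
            then have "poly (PP I a (\<lambda>i. S $ i $ i)) t = 0"
              unfolding poly_PP w_def using True finI by (auto intro: prod_zero)
            then show False using nocommon t by blast
          qed
        next
          case False
          then show ?thesis unfolding w_def using Soff aI by simp
        qed
        define K where "K = diagm (\<lambda>j. 1 / w j)"
        have "(\<Sum>i\<in>I. a i / w i) = 0"
        proof -
          have "poly (G S) t = (\<Prod>j\<in>I. w j) * (\<Sum>i\<in>I. a i / w i)"
            unfolding G_def w_def using PP1_nonzero_form[OF finI, of "\<lambda>i. S $ i $ i" t a] wnz w_def
            by simp
          moreover have "(\<Prod>j\<in>I. w j) \<noteq> 0" using wnz finI by simp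
          ultimately show ?thesis using t by simp
        qed
        then have KL: "K \<in> L" unfolding Lchar K_def by auto
        have Kinv: "invertible K" "matrix_inv K = M"
          unfolding K_def M \<phi>_def using diagm_inv[of "\<lambda>j. 1 / w j"] wnz by (auto simp: w_def)
        have MX: "M \<in> X" unfolding X_def using KL Kinv by force
        have Sig: "M - S \<in> orth_space L"
          unfolding orth_space_def
        proof (intro CollectI conjI ballI)
          show "M - S \<in> sym_mats"
            using S unfolding sym_mats_def M \<phi>_def by (simp add: transpose_minus transpose_diagm)
          fix K' assume "K' \<in> L"
          then obtain k where k: "K' = diagm k" "(\<Sum>i\<in>I. a i * k i) = 0" using Lchar by blast
          have "trace (K' ** (M - S)) = (\<Sum>i\<in>UNIV. a i * (t * k i))"
            unfolding k(1) trace_diagm_mult M \<phi>_def by (simp add: diagm_nth algebra_simps)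
          also have "\<dots> = t * (\<Sum>i\<in>I. a i * k i)" unfolding sumI by (simp add: sum_distrib_left algebra_simps)
          finally show "trace (K' ** (M - S)) = 0" using k(2) by simp
        qed
        have "M = (M - S) + S" by simp
        then show "M \<in> ml_set L S" unfolding ml_set_def using MX Xrec Sig by blast
      qed
    qed
  qed
  have injphi: "inj (\<phi> S)" for S
  proof (rule injI)
    fix t1 t2 assume "\<phi> S t1 = \<phi> S t2"
    then have "\<phi> S t1 $ i0 $ i0 = \<phi> S t2 $ i0 $ i0" for i0 by simp
    moreover obtain i0 where "i0 \<in> I" using Ine by blast
    ultimately show "t1 = t2" unfolding \<phi>_def diagm_nth using aI by force
  qed
  have count: "finite (ml_set L S) \<and> card (ml_set L S) = rank A - 1"
    if S: "S \<in> sym_mats" and pS: "p S \<noteq> 0" for S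
  proof -
    have res2: "resultant (G S) (pderiv (G S)) \<noteq> 0" using pS unfolding p_def by auto
    have "\<not> (poly (G S) t = 0 \<and> poly (pderiv (G S)) t = 0)" for t
      using res2 unfolding resultant_zero_iff[OF Gnz] by blast
    from card_roots_sqfree[OF this]
    have R: "finite {t. poly (G S) t = 0}" "card {t. poly (G S) t = 0} = card I - 1"
      using degG by auto
    show ?thesis
      unfolding main[OF S pS] rankA using R card_image[OF inj_on_subset[OF injphi subset_UNIV]]
      by simp
  qed
  show ?thesis
    unfolding has_ml_degree_def using polyp S0sym pS0 count by blast
qed

end
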